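(* Let $E$ be a directed graph. Then $\mathcal S(E)$ is locally strongly graded in the natural $\mathbb Z$-grading if and only if for all $v\in E^0$ and all $n\in\mathbb Z$ there exist paths $x,y$ in $E$ with $\mathbf s(x)=v$, $\mathbf r(x)=\mathbf r(y)$, and $|x|-|y|=n$.
   Context: A directed graph $E=(E^0,E^1,\mathbf r,\mathbf s)$; paths are finite sequences of edges $e_1\cdots e_n$ with $\mathbf r(e_i)=\mathbf s(e_{i+1})$, vertices being paths of length 0; $|x|$ is the length. $\mathcal S(E)$ is the semigroup with zero generated by $E^0\cup E^1\cup\{e^{-1}:e\in E^1\}$ subject to $vw=\delta_{v,w}v$, $\mathbf s(e)e=e\mathbf r(e)=e$, $\mathbf r(e)e^{-1}=e^{-1}\mathbf s(e)=e^{-1}$, $e^{-1}f=\delta_{e,f}\mathbf r(e)$; it is an inverse semigroup whose nonzero elements are uniquely $xy^{-1}$ with paths $x,y$ and $\mathbf r(x)=\mathbf r(y)$. Natural $\mathbb Z$-grading: $\deg(xy^{-1})=|x|-|y|$, $\mathcal S(E)_n=\deg^{-1}(n)\cup\{0\}$. Natural partial order: $s\le t$ iff $s=tu$ for an idempotent $u$. A graded inverse semigroup $S$ is locally strongly graded if for all $\alpha,\beta$ and $s\in S_{\alpha\beta}\setminus\{0\}$ there is $t\in S_\alpha S_\beta\setminus\{0\}$ with $t\le s$. *)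

theory Defs
  imports Main "HOL-Library.Sublist"
begin

text \<open>A directed graph E = (E0, E1, r, s): vertex set E0, edge set E1,
  source map src and range map rng (only their values on E1 matter).\<close>

definition digraph :: "'v set \<Rightarrow> 'e set \<Rightarrow> ('e \<Rightarrow> 'v) \<Rightarrow> ('e \<Rightarrow> 'v) \<Rightarrow> bool" where
  "digraph E0 E1 src rng \<longleftrightarrow> src ` E1 \<subseteq> E0 \<and> rng ` E1 \<subseteq> E0"

text \<open>A path is represented as a pair (v, es): its source vertex v and its
  list of edges es.  The vertex v as a path of length 0 is (v, []).\<close>

type_synonym ('v,'e) path = "'v \<times> 'e list"

definition is_path :: "'v set \<Rightarrow> 'e set \<Rightarrow> ('e \<Rightarrow> 'v) \<Rightarrow> ('e \<Rightarrow> 'v) \<Rightarrow> ('v,'e) path \<Rightarrow> bool" where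
  "is_path E0 E1 src rng p \<longleftrightarrow>
     fst p \<in> E0 \<and> set (snd p) \<subseteq> E1 \<and>
     (snd p \<noteq> [] \<longrightarrow> src (hd (snd p)) = fst p) \<and>
     (\<forall>i. Suc i < length (snd p) \<longrightarrow> rng (snd p ! i) = src (snd p ! Suc i))"

definition path_src :: "('v,'e) path \<Rightarrow> 'v" where
  "path_src p = fst p"

definition path_rng :: "('e \<Rightarrow> 'v) \<Rightarrow> ('v,'e) path \<Rightarrow> 'v" where
  "path_rng rng p = (if snd p = [] then fst p else rng (last (snd p)))"

definition path_len :: "('v,'e) path \<Rightarrow> nat" where
  "path_len p = length (snd p)"

definition path_prefix :: "('v,'e) path \<Rightarrow> ('v,'e) path \<Rightarrow> bool" where
  "path_prefix x y \<longleftrightarrow> fst x = fst y \<and> prefix (snd x) (snd y)"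

text \<open>If x is a prefix of y, y = x \<cdot> (y minus x); extending a path z by that rest.\<close>
definition path_ext :: "('v,'e) path \<Rightarrow> ('v,'e) path \<Rightarrow> ('v,'e) path \<Rightarrow> ('v,'e) path" where
  "path_ext z x y = (fst z, snd z @ drop (length (snd x)) (snd y))"

text \<open>Elements: None is the zero, Some (x, y) is x y^{-1}.\<close>

definition SE :: "'v set \<Rightarrow> 'e set \<Rightarrow> ('e \<Rightarrow> 'v) \<Rightarrow> ('e \<Rightarrow> 'v) \<Rightarrow> (('v,'e) path \<times> ('v,'e) path) option set" where
  "SE E0 E1 src rng = {None} \<union>
     {Some (x, y) | x y. is_path E0 E1 src rng x \<and> is_path E0 E1 src rng y \<and> path_rng rng x = path_rng rng y}"

text \<open>(x y^{-1})(z w^{-1}) = x p w^{-1} if z = y p;  x (w q)^{-1} if y = z q;  0 otherwise.\<close>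
fun SE_mult :: "(('v,'e) path \<times> ('v,'e) path) option \<Rightarrow> (('v,'e) path \<times> ('v,'e) path) option \<Rightarrow> (('v,'e) path \<times> ('v,'e) path) option" where
  "SE_mult (Some (x, y)) (Some (z, w)) =
     (if path_prefix y z then Some (path_ext x y z, w)
      else if path_prefix z y then Some (x, path_ext w z y)
      else None)"
| "SE_mult _ _ = None"

definition SE_deg :: "(('v,'e) path \<times> ('v,'e) path) option \<Rightarrow> int" where
  "SE_deg s = (case s of None \<Rightarrow> 0 | Some (x, y) \<Rightarrow> int (path_len x) - int (path_len y))"

definition SE_comp :: "'v set \<Rightarrow> 'e set \<Rightarrow> ('e \<Rightarrow> 'v) \<Rightarrow> ('e \<Rightarrow> 'v) \<Rightarrow> int \<Rightarrow> (('v,'e) path \<times> ('v,'e) path) option set" where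
  "SE_comp E0 E1 src rng n = {s \<in> SE E0 E1 src rng. s = None \<or> SE_deg s = n}"

definition nat_le :: "'a set \<Rightarrow> ('a \<Rightarrow> 'a \<Rightarrow> 'a) \<Rightarrow> 'a \<Rightarrow> 'a \<Rightarrow> bool" where
  "nat_le S m s t \<longleftrightarrow> (\<exists>u\<in>S. m u u = u \<and> s = m t u)"

definition set_prod :: "('a \<Rightarrow> 'a \<Rightarrow> 'a) \<Rightarrow> 'a set \<Rightarrow> 'a set \<Rightarrow> 'a set" where
  "set_prod m A B = {m a b | a b. a \<in> A \<and> b \<in> B}"

definition locally_strongly_graded ::
  "'a set \<Rightarrow> ('a \<Rightarrow> 'a \<Rightarrow> 'a) \<Rightarrow> 'a \<Rightarrow> (int \<Rightarrow> 'a set) \<Rightarrow> bool" where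
  "locally_strongly_graded S m z G \<longleftrightarrow>
     (\<forall>\<alpha> \<beta>. \<forall>s \<in> G (\<alpha> + \<beta>) - {z}.
        \<exists>t \<in> set_prod m (G \<alpha>) (G \<beta>) - {z}. nat_le S m t s)"

end

theory Submission
  imports Defs
begin

lemma path_concat:
  assumes px: "is_path E0 E1 src rng x" and pp: "is_path E0 E1 src rng p"
    and c: "fst p = path_rng rng x"
  shows "is_path E0 E1 src rng (fst x, snd x @ snd p)
         \<and> path_rng rng (fst x, snd x @ snd p) = path_rng rng p"
proof (cases "snd x = []")
  case True
  then have "fst p = fst x" using c by (simp add: path_rng_def)
  then show ?thesis using True px pp
    by (cases p) (simp add: is_path_def path_rng_def)
next
  case xne: False
  show ?thesis
  proof (cases "snd p = []")
    case True
    then show ?thesis using px c by (cases x) (simp add: is_path_def path_rng_def)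
  next
    case pne: False
    have l: "rng (last (snd x)) = src (hd (snd p))"
      using c xne pne pp by (simp add: path_rng_def is_path_def)
    have chain: "rng ((snd x @ snd p) ! i) = src ((snd x @ snd p) ! Suc i)"
      if "Suc i < length (snd x @ snd p)" for i
    proof -
      consider "Suc i < length (snd x)" | "Suc i = length (snd x)" | "Suc i > length (snd x)" by linarith
      then show ?thesis
      proof cases
        case 1 then show ?thesis using px by (simp add: is_path_def nth_append)
      next
        case 2
        have "i = length (snd x) - 1" using 2 by simp
        then have "snd x ! i = last (snd x)" using xne by (simp add: last_conv_nth)
        moreover have "snd p ! 0 = hd (snd p)" using pne by (simp add: hd_conv_nth)
        ultimately show ?thesis using 2 l by (simp add: nth_append)
      next
        case 3
        then obtain k where k: "i = length (snd x) + k" by (metis less_Suc_eq_le le_iff_add)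
        then have "Suc k < length (snd p)" using that by simp
        then have "rng (snd p ! k) = src (snd p ! Suc k)" using pp by (simp add: is_path_def)
        then show ?thesis using k by (simp add: nth_append)
      qed
    qed
    show ?thesis using px pp xne pne chain by (simp add: is_path_def path_rng_def)
  qed
qed

lemma mult_fst:
  assumes "SE_mult a b = Some (t1, t2)"
  shows "\<exists>x y z w. a = Some (x, y) \<and> b = Some (z, w) \<and> fst t1 = fst x"
  using assms
  by (cases "(a, b)" rule: SE_mult.cases)
     (auto simp: path_ext_def split: if_splits)

theorem proposition8p9:
  fixes E0 :: "'v set" and E1 :: "'e set" and src rng :: "'e \<Rightarrow> 'v"
  assumes "digraph E0 E1 src rng"
  shows "locally_strongly_graded (SE E0 E1 src rng) SE_mult None (SE_comp E0 E1 src rng)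
     \<longleftrightarrow> (\<forall>v \<in> E0. \<forall>n :: int. \<exists>x y. is_path E0 E1 src rng x \<and> is_path E0 E1 src rng y \<and>
            path_src x = v \<and> path_rng rng x = path_rng rng y \<and>
            int (path_len x) - int (path_len y) = n)"
proof
  assume L: "locally_strongly_graded (SE E0 E1 src rng) SE_mult None (SE_comp E0 E1 src rng)"
  show "\<forall>v \<in> E0. \<forall>n :: int. \<exists>x y. is_path E0 E1 src rng x \<and> is_path E0 E1 src rng y \<and>
            path_src x = v \<and> path_rng rng x = path_rng rng y \<and>
            int (path_len x) - int (path_len y) = n"
  proof (intro ballI allI)
    fix v n assume v: "v \<in> E0"
    define s where "s = Some ((v, [] :: 'e list), (v, [] :: 'e list))"
    have vp: "is_path E0 E1 src rng (v, [])" using v by (simp add: is_path_def)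
    have "s \<in> SE_comp E0 E1 src rng (n + - n) - {None}"
      using vp by (auto simp: s_def SE_comp_def SE_def SE_deg_def path_len_def)
    then obtain t where t: "t \<in> set_prod SE_mult (SE_comp E0 E1 src rng n) (SE_comp E0 E1 src rng (- n)) - {None}"
      and le: "nat_le (SE E0 E1 src rng) SE_mult t s"
      using L unfolding locally_strongly_graded_def by blast
    obtain a b where ab: "t = SE_mult a b" "a \<in> SE_comp E0 E1 src rng n" "b \<in> SE_comp E0 E1 src rng (- n)"
      using t by (auto simp: set_prod_def)
    obtain t1 t2 where tt: "t = Some (t1, t2)" using t by auto
    obtain x y z w where a: "a = Some (x, y)" and "b = Some (z, w)" and f1: "fst t1 = fst x"
      using mult_fst[of a b t1 t2] ab tt by auto
    obtain u where u: "t = SE_mult s u" using le by (auto simp: nat_le_def)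
    have "fst t1 = v"
    proof (cases u)
      case None then show ?thesis using u tt by simp
    next
      case (Some p) then obtain z' w' where "u = Some (z', w')" by (cases p) auto
      then show ?thesis using u tt
        by (auto simp: s_def path_prefix_def path_ext_def split: if_splits)
    qed
    moreover have "is_path E0 E1 src rng x \<and> is_path E0 E1 src rng y \<and> path_rng rng x = path_rng rng y
        \<and> int (path_len x) - int (path_len y) = n"
      using ab(2) a by (auto simp: SE_comp_def SE_def SE_deg_def)
    ultimately show "\<exists>x y. is_path E0 E1 src rng x \<and> is_path E0 E1 src rng y \<and>
            path_src x = v \<and> path_rng rng x = path_rng rng y \<and>
            int (path_len x) - int (path_len y) = n"
      using f1 by (metis path_src_def)
  qed
next
  assume R: "\<forall>v \<in> E0. \<forall>n :: int. \<exists>x y. is_path E0 E1 src rng x \<and> is_path E0 E1 src rng y \<and>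
            path_src x = v \<and> path_rng rng x = path_rng rng y \<and>
            int (path_len x) - int (path_len y) = n"
  show "locally_strongly_graded (SE E0 E1 src rng) SE_mult None (SE_comp E0 E1 src rng)"
    unfolding locally_strongly_graded_def
  proof (intro allI ballI)
    fix \<alpha> \<beta> s assume s: "s \<in> SE_comp E0 E1 src rng (\<alpha> + \<beta>) - {None}"
    then obtain x y where sxy: "s = Some (x, y)" and px: "is_path E0 E1 src rng x"
      and py: "is_path E0 E1 src rng y" and rxy: "path_rng rng x = path_rng rng y"
      and dg: "int (path_len x) - int (path_len y) = \<alpha> + \<beta>"
      by (auto simp: SE_comp_def SE_def SE_deg_def)
    have "path_rng rng x \<in> E0"
    proof (cases "snd x = []")
      case True then show ?thesis using px by (simp add: path_rng_def is_path_def)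
    next
      case False
      then have "last (snd x) \<in> E1" using px by (auto simp: is_path_def)
      then show ?thesis using False assms by (auto simp: path_rng_def digraph_def)
    qed
    then obtain p q where pp: "is_path E0 E1 src rng p" and pq: "is_path E0 E1 src rng q"
      and sp: "path_src p = path_rng rng x" and rpq: "path_rng rng p = path_rng rng q"
      and dpq: "int (path_len p) - int (path_len q) = \<alpha> - int (path_len x)"
      using R by blast
    define xp where "xp = (fst x, snd x @ snd p)"
    define yp where "yp = (fst y, snd y @ snd p)"
    have xpp: "is_path E0 E1 src rng xp" "path_rng rng xp = path_rng rng p"
      using path_concat[OF px pp] sp by (auto simp: xp_def path_src_def)
    have ypp: "is_path E0 E1 src rng yp" "path_rng rng yp = path_rng rng p"
      using path_concat[OF py pp] sp rxy by (auto simp: yp_def path_src_def)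
    define a where "a = Some (xp, q)"
    define b where "b = Some (q, yp)"
    define t where "t = Some (xp, yp)"
    have "a \<in> SE_comp E0 E1 src rng \<alpha>"
      using xpp pq rpq dpq by (cases q, auto simp: a_def SE_comp_def SE_def SE_deg_def xp_def path_len_def)
    moreover have "b \<in> SE_comp E0 E1 src rng \<beta>"
      using ypp pq rpq dpq dg by (cases q, cases yp, auto simp: b_def SE_comp_def SE_def SE_deg_def yp_def path_len_def)
    moreover have "t = SE_mult a b"
      by (simp add: a_def b_def t_def path_prefix_def path_ext_def)
    ultimately have "t \<in> set_prod SE_mult (SE_comp E0 E1 src rng \<alpha>) (SE_comp E0 E1 src rng \<beta>) - {None}"
    proof -
      assume h: "a \<in> SE_comp E0 E1 src rng \<alpha>" "b \<in> SE_comp E0 E1 src rng \<beta>" "t = SE_mult a b"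
      have "t \<in> set_prod SE_mult (SE_comp E0 E1 src rng \<alpha>) (SE_comp E0 E1 src rng \<beta>)"
        unfolding set_prod_def using h by blast
      moreover have "t \<noteq> None" by (simp add: t_def)
      ultimately show ?thesis by blast
    qed
    moreover have "nat_le (SE E0 E1 src rng) SE_mult t s"
      unfolding nat_le_def
    proof (intro bexI[of _ "Some (yp, yp)"] conjI)
      show "Some (yp, yp) \<in> SE E0 E1 src rng" using ypp by (cases yp, auto simp: SE_def)
      show "SE_mult (Some (yp, yp)) (Some (yp, yp)) = Some (yp, yp)"
        by (simp add: path_prefix_def path_ext_def)
      show "t = SE_mult s (Some (yp, yp))"
        by (simp add: sxy t_def xp_def yp_def path_prefix_def path_ext_def)
    qed
    ultimately show "\<exists>t \<in> set_prod SE_mult (SE_comp E0 E1 src rng \<alpha>) (SE_comp E0 E1 src rng \<beta>) - {None}.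
        nat_le (SE E0 E1 src rng) SE_mult t s" by blast
  qed
qed

end
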